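(* Let $p$ be an odd prime and $\mathbf{s}=(s_1,\dots,s_l)$ a tuple of positive integers with $\mathbf{s}=\overline{\mathbf{s}}$ and $|\mathbf{s}|=s_1+\dots+s_l$ odd. Then $H(\mathbf{s};p-1)\equiv S(\mathbf{s};p-1)\equiv0\pmod p$.
   Context: $\overline{\mathbf{s}}=(s_l,\dots,s_1)$. $H(\mathbf{s};N)=\sum_{1\le k_1<\dots<k_l\le N}k_1^{-s_1}\cdots k_l^{-s_l}$, $S(\mathbf{s};N)=\sum_{1\le k_1\le\dots\le k_l\le N}k_1^{-s_1}\cdots k_l^{-s_l}$. Congruences of rationals with denominators prime to $p$ are in the usual $p$-integral sense. *)

theory Defs
  imports Complex_Main "HOL-Computational_Algebra.Primes"
begin

text \<open>A tuple s = (s_1,...,s_l) is a list with s ! (i-1) = s_i.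
  Index tuples (k_1,...,k_l) are lists ks with ks ! (i-1) = k_i.\<close>

definition H :: "nat list \<Rightarrow> nat \<Rightarrow> rat" where
  "H s N = (\<Sum>ks\<in>{ks. length ks = length s \<and> sorted_wrt (<) ks \<and> set ks \<subseteq> {1..N}}.
              \<Prod>i<length s. 1 / (of_nat (ks ! i)) ^ (s ! i))"

definition S :: "nat list \<Rightarrow> nat \<Rightarrow> rat" where
  "S s N = (\<Sum>ks\<in>{ks. length ks = length s \<and> sorted_wrt (\<le>) ks \<and> set ks \<subseteq> {1..N}}.
              \<Prod>i<length s. 1 / (of_nat (ks ! i)) ^ (s ! i))"

definition rat_cong :: "rat \<Rightarrow> rat \<Rightarrow> nat \<Rightarrow> bool" where
  "rat_cong x y p \<longleftrightarrow> (\<exists>a b::int. \<not> int p dvd b \<and> int p dvd a \<and> x - y = of_int a / of_int b)"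

end

theory Submission
  imports Defs "HOL-Number_Theory.Cong"
begin

lemma rc_add:
  assumes "prime p" "rat_cong x 0 p" "rat_cong y 0 p"
  shows "rat_cong (x + y) 0 p"
proof -
  obtain a b where ab: "\<not> int p dvd b" "int p dvd a" "x = of_int a / of_int b"
    using assms(2) unfolding rat_cong_def by auto
  obtain c d where cd: "\<not> int p dvd d" "int p dvd c" "y = of_int c / of_int d"
    using assms(3) unfolding rat_cong_def by auto
  have b0: "b \<noteq> 0" "d \<noteq> 0" using ab(1) cd(1) by auto
  have pr: "prime (int p)" using assms(1) by simp
  have "\<not> int p dvd b * d" using ab(1) cd(1) pr prime_dvd_mult_iff by blast
  moreover have "int p dvd a * d + c * b" using ab(2) cd(2) by simp
  moreover have "x + y = of_int (a * d + c * b) / of_int (b * d)"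
    using b0 by (simp add: ab(3) cd(3) field_simps)
  ultimately show ?thesis unfolding rat_cong_def
    by (rule_tac exI[of _ "a * d + c * b"], rule_tac exI[of _ "b * d"]) simp
qed

lemma rc_zero: "prime p \<Longrightarrow> rat_cong 0 0 p"
  unfolding rat_cong_def by (rule exI[of _ 0], rule exI[of _ 1]) (auto simp: prime_gt_1_nat)
 
lemma rc_sum:
  assumes "prime p" "\<And>x. x \<in> A \<Longrightarrow> rat_cong (f x) 0 p"
  shows "rat_cong (sum f A) 0 p"
proof (cases "finite A")
  case True
  then show ?thesis using assms(2)
    by (induction A rule: finite_induct) (auto simp: rc_zero[OF assms(1)] intro!: rc_add[OF assms(1)])
next
  case False
  then show ?thesis by (simp add: rc_zero[OF assms(1)])
qed

lemma rc_half:
  assumes "prime p" "odd p" "rat_cong (2 * x) 0 p"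
  shows "rat_cong x 0 p"
proof -
  obtain a b where ab: "\<not> int p dvd b" "int p dvd a" "2 * x = of_int a / of_int b"
    using assms(3) unfolding rat_cong_def by auto
  have b0: "b \<noteq> 0" using ab(1) by auto
  have pr: "prime (int p)" using assms(1) by simp
  have n2: "\<not> p dvd 2"
  proof
    assume "p dvd 2"
    hence "p \<le> 2" by (rule dvd_imp_le) simp
    moreover have "p \<ge> 2" using prime_ge_2_nat[OF assms(1)] .
    ultimately have "p = 2" by linarith
    thus False using assms(2) by simp
  qed
  have "int p dvd int 2 \<longleftrightarrow> p dvd 2" by (rule int_dvd_int_iff)
  hence "\<not> int p dvd 2" using n2 by simp
  hence c1: "\<not> int p dvd 2 * b" using ab(1) pr prime_dvd_mult_iff by blast
  have c3: "x = of_int a / of_int (2 * b)" using ab(3) b0 by (simp add: field_simps)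
  show ?thesis using c1 ab(2) c3 unfolding rat_cong_def
    by (rule_tac exI[of _ a], rule_tac exI[of _ "2 * b"]) simp
qed

lemma rc_pair:
  fixes A B :: int
  assumes "prime p" "\<not> int p dvd A" "\<not> int p dvd B" "int p dvd A + B"
  shows "rat_cong (1 / of_int A + 1 / of_int B) 0 p"
proof -
  have pr: "prime (int p)" using assms(1) by simp
  have "A \<noteq> 0" "B \<noteq> 0" using assms by auto
  hence "1 / of_int A + 1 / of_int B = (of_int (A + B) / of_int (A * B) :: rat)"
    by (simp add: field_simps)
  moreover have "\<not> int p dvd A * B" using assms pr prime_dvd_mult_iff by blast
  ultimately show ?thesis using assms(4) unfolding rat_cong_def
    by (rule_tac exI[of _ "A + B"], rule_tac exI[of _ "A * B"]) simp
qed

definition G :: "(nat \<Rightarrow> nat \<Rightarrow> bool) \<Rightarrow> nat list \<Rightarrow> nat \<Rightarrow> rat" where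
  "G R s N = (\<Sum>ks\<in>{ks. length ks = length s \<and> sorted_wrt R ks \<and> set ks \<subseteq> {1..N}}.
              \<Prod>i<length s. 1 / (of_nat (ks ! i)) ^ (s ! i))"

lemma sorted_wrt_cong:
  "(\<And>x y. x \<in> set xs \<Longrightarrow> y \<in> set xs \<Longrightarrow> P x y = Q x y) \<Longrightarrow> sorted_wrt P xs = sorted_wrt Q xs"
  by (induction xs) auto

lemma prod_inv:
  fixes l :: nat
  shows "(\<Prod>i<l. 1 / (of_nat (g i) :: rat) ^ (e i)) = 1 / of_int (\<Prod>i<l. int (g i) ^ e i)"
  by (induction l) (auto simp: field_simps)

lemma main:
  fixes p :: nat and s :: "nat list"
  assumes p: "prime p" "odd p"
    and R: "\<And>x y. x \<le> p \<Longrightarrow> y \<le> p \<Longrightarrow> R (p - y) (p - x) = R x y"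
    and rs: "rev s = s"
    and od: "odd (sum_list s)"
  shows "rat_cong (G R s (p - 1)) 0 p"
proof -
  define l where "l = length s"
  define I where "I = {ks. length ks = length s \<and> sorted_wrt R ks \<and> set ks \<subseteq> {1..p-1}}"
  define T where "T ks = (\<Prod>i<l. 1 / (of_nat (ks ! i) :: rat) ^ (s ! i))" for ks
  define f where "f ks = rev (map (\<lambda>k. p - k) ks)" for ks :: "nat list"
  have ff: "f (f ks) = ks" if "ks \<in> I" for ks
  proof -
    have "\<forall>k\<in>set ks. k \<le> p" using that unfolding I_def by force
    hence "\<forall>k\<in>set ks. p - (p - k) = k" by simp
    then show ?thesis unfolding f_def by (simp add: rev_map map_idI)
  qed
  have fI: "f ks \<in> I" if "ks \<in> I" for ks
  proof -
    have sub: "set ks \<subseteq> {1..p-1}" using that unfolding I_def by auto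
    have "sorted_wrt (\<lambda>x y. R (p - y) (p - x)) ks = sorted_wrt R ks"
      using sub by (intro sorted_wrt_cong R) force+
    moreover have "set (f ks) \<subseteq> {1..p-1}"
    proof -
      have p1: "p > 1" using p prime_gt_1_nat by blast
      have "1 \<le> p - x \<and> p - x \<le> p - 1" if "x \<in> set ks" for x
      proof -
        have "x \<in> {1..p-1}" using sub that by blast
        thus ?thesis using p1 by auto
      qed
      thus ?thesis unfolding f_def by auto
    qed
    ultimately show ?thesis using that unfolding I_def f_def
      by (simp add: sorted_wrt_rev sorted_wrt_map)
  qed
  have reidx: "sum T I = sum (T \<circ> f) I"
    by (rule sum.reindex_bij_witness[where i=f and j=f]) (auto simp: ff fI)
  have Tf: "T (f ks) = (\<Prod>j<l. 1 / (of_nat (p - ks ! j) :: rat) ^ (s ! j))" if "ks \<in> I" for ks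
  proof -
    have len: "length ks = l" using that unfolding I_def l_def by auto
    have "T (f ks) = (\<Prod>i<l. 1 / (of_nat (p - ks ! (l - 1 - i)) :: rat) ^ (s ! i))"
      unfolding T_def f_def using len by (intro prod.cong) (auto simp: rev_nth)
    also have "\<dots> = (\<Prod>i<l. 1 / (of_nat (p - ks ! (l - 1 - i)) :: rat) ^ (s ! (l - 1 - i)))"
    proof (intro prod.cong refl)
      fix i assume "i \<in> {..<l}"
      hence "s ! i = rev s ! i" using rs by simp
      also have "\<dots> = s ! (l - 1 - i)" using \<open>i \<in> {..<l}\<close> by (simp add: rev_nth l_def)
      finally show "1 / (of_nat (p - ks ! (l - 1 - i)) :: rat) ^ (s ! i) =
          1 / (of_nat (p - ks ! (l - 1 - i))) ^ (s ! (l - 1 - i))" by simp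
    qed
    also have "\<dots> = (\<Prod>j<l. 1 / (of_nat (p - ks ! j) :: rat) ^ (s ! j))"
      by (rule prod.reindex_bij_witness[where i="\<lambda>j. l - 1 - j" and j="\<lambda>j. l - 1 - j"]) auto
    finally show ?thesis .
  qed
  have GT: "G R s (p - 1) = sum T I" unfolding G_def I_def T_def l_def ..
  have "2 * G R s (p - 1) = sum T I + sum (T \<circ> f) I"
    using reidx unfolding GT by simp
  also have "\<dots> = (\<Sum>ks\<in>I. T ks + T (f ks))" by (simp add: sum.distrib)
  finally have eq: "2 * G R s (p - 1) = (\<Sum>ks\<in>I. T ks + T (f ks))" .
  have pr: "prime (int p)" using p by simp
  have trm: "rat_cong (T ks + T (f ks)) 0 p" if "ks \<in> I" for ks
  proof -
    have len: "length ks = l" using that unfolding I_def l_def by auto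
    have kr: "ks ! i \<in> {1..p-1}" if "i < l" for i
    proof -
      have "ks ! i \<in> set ks" using that len by simp
      thus ?thesis using \<open>ks \<in> I\<close> unfolding I_def by blast
    qed
    define A where "A = (\<Prod>i<l. int (ks ! i) ^ (s ! i))"
    define B where "B = (\<Prod>i<l. int (p - ks ! i) ^ (s ! i))"
    have TA: "T ks = 1 / of_int A" unfolding T_def A_def by (rule prod_inv)
    have TB: "T (f ks) = 1 / of_int B" unfolding Tf[OF that] B_def by (rule prod_inv)
    have nA: "\<not> int p dvd A" unfolding A_def
    proof
      assume "int p dvd (\<Prod>i<l. int (ks ! i) ^ (s ! i))"
      then obtain i where i: "i < l" "int p dvd int (ks ! i) ^ (s ! i)"
        using pr by (auto simp: prime_dvd_prod_iff)
      hence "int p dvd int (ks ! i)" using pr prime_dvd_power by blast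
      hence d: "p dvd ks ! i" by simp
      have k1: "1 \<le> ks ! i" "ks ! i \<le> p - 1" using kr[OF i(1)] by simp_all
      have p0: "p > 0" using prime_gt_0_nat[OF p(1)] .
      have "0 < ks ! i" using k1 p0 by linarith
      hence "p \<le> ks ! i" using dvd_imp_le[OF d] by blast
      thus False using k1 p0 by linarith
    qed
    have nB: "\<not> int p dvd B" unfolding B_def
    proof
      assume "int p dvd (\<Prod>i<l. int (p - ks ! i) ^ (s ! i))"
      then obtain i where i: "i < l" "int p dvd int (p - ks ! i) ^ (s ! i)"
        using pr by (auto simp: prime_dvd_prod_iff)
      hence "int p dvd int (p - ks ! i)" using pr prime_dvd_power by blast
      hence d: "p dvd p - ks ! i" by simp
      have k1: "1 \<le> ks ! i" "ks ! i \<le> p - 1" using kr[OF i(1)] by simp_all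
      have p0: "p > 0" using prime_gt_0_nat[OF p(1)] .
      have "0 < p - ks ! i" using k1 p0 by linarith
      hence "p \<le> p - ks ! i" using dvd_imp_le[OF d] by blast
      thus False using k1 p0 by linarith
    qed
    have cB: "[B = (\<Prod>i<l. (- int (ks ! i)) ^ (s ! i))] (mod int p)"
      unfolding B_def
    proof (intro cong_prod cong_pow)
      fix i assume "i \<in> {..<l}"
      hence "ks ! i \<in> {1..p-1}" using kr[of i] by simp
      hence "ks ! i \<le> p" by auto
      hence "int (p - ks ! i) = - int (ks ! i) + int p" by simp
      thus "[int (p - ks ! i) = - int (ks ! i)] (mod int p)"
        unfolding cong_iff_dvd_diff by simp
    qed
    have sg1: "(\<Prod>i<l. (- int (ks ! i)) ^ (s ! i)) = (\<Prod>i<l. (-1) ^ (s ! i)) * A"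
      unfolding A_def prod.distrib[symmetric] by (rule prod.cong) (simp_all add: power_mult_distrib[symmetric])
    have sg2: "(\<Prod>i<l. ((-1)::int) ^ (s ! i)) = (-1) ^ (\<Sum>i<l. s ! i)"
      by (rule power_sum[symmetric])
    have sg3: "(\<Sum>i<l. s ! i) = sum_list s"
      by (simp add: sum_list_sum_nth l_def atLeast0LessThan)
    have sg4: "((-1)::int) ^ sum_list s = -1" using od by simp
    have "(\<Prod>i<l. (- int (ks ! i)) ^ (s ! i)) = - A"
      unfolding sg1 sg2 sg3 sg4 by simp
    hence "[B = - A] (mod int p)" using cB by simp
    hence "int p dvd B - (- A)" by (simp only: cong_iff_dvd_diff)
    hence "int p dvd A + B" by (simp add: add.commute)
    then show ?thesis unfolding TA TB using rc_pair[OF p(1) nA nB] by simp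
  qed
  have "rat_cong (2 * G R s (p - 1)) 0 p"
    unfolding eq by (rule rc_sum[OF p(1) trm])
  then show ?thesis using rc_half p by blast
qed

theorem corollary3p4:
  fixes p :: nat and s :: "nat list"
  assumes "prime p" and "odd p"
    and "\<forall>x\<in>set s. x > 0"
    and "rev s = s"
    and "odd (sum_list s)"
  shows "rat_cong (H s (p - 1)) 0 p \<and> rat_cong (S s (p - 1)) 0 p"
proof
  have "H s (p - 1) = G (<) s (p - 1)" unfolding H_def G_def ..
  moreover have "rat_cong (G (<) s (p - 1)) 0 p"
    by (rule main) (use assms in auto)
  ultimately show "rat_cong (H s (p - 1)) 0 p" by simp
next
  have "S s (p - 1) = G (\<le>) s (p - 1)" unfolding S_def G_def ..
  moreover have "rat_cong (G (\<le>) s (p - 1)) 0 p"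
    by (rule main) (use assms in auto)
  ultimately show "rat_cong (S s (p - 1)) 0 p" by simp
qed

end
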